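(* Let $\mathcal{E}$ be a finite-dimensional Euclidean space and let $\mathcal{K}\subseteq\mathcal{E}$ be a closed convex cone with $\dim\mathcal{K}\le 4$. Then $\mathcal{K}$ is amenable if and only if $\mathcal{K}$ is projectionally exposed.
   Context: A face of a closed convex set $C$ is a closed convex subset $F\subseteq C$ such that whenever $x,y\in C$ and $\alpha x+(1-\alpha)y\in F$ for some $\alpha\in(0,1)$, then $x,y\in F$. A closed convex cone $\mathcal{K}$ is amenable if for every face $\mathcal{F}$ of $\mathcal{K}$ there exists $\kappa>0$ such that $\operatorname{dist}(x,\mathcal{F})\le\kappa\operatorname{dist}(x,\mathcal{K})$ for all $x\in\operatorname{span}\mathcal{F}$. A face $\mathcal{F}$ of $\mathcal{K}$ is projectionally exposed if there is an idempotent linear map $P:\mathcal{E}\to\mathcal{E}$ (not necessarily orthogonal) with $P(\mathcal{K})=\mathcal{F}$; $\mathcal{K}$ is projectionally exposed if every face is. *)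

theory Defs
  imports "HOL-Analysis.Analysis"
begin

text \<open>Faces in the sense of the paper: closed convex subsets F of C with the
extremality property; we use the library notion face_of (which includes
convexity and extremality along open segments) plus closedness. Faces are
taken nonempty (standard convention for faces of cones; the smallest face of a
nonempty cone is {0}).\<close>

definition is_face :: "'a::euclidean_space set \<Rightarrow> 'a set \<Rightarrow> bool" where
  "is_face F C \<longleftrightarrow> F face_of C \<and> closed F \<and> F \<noteq> {}"

definition amenable :: "'a::euclidean_space set \<Rightarrow> bool" where
  "amenable K \<longleftrightarrow>
     (\<forall>F. is_face F K \<longrightarrow>
        (\<exists>\<kappa>>0. \<forall>x\<in>span F. infdist x F \<le> \<kappa> * infdist x K))"

definition projectionally_exposed_face :: "'a::euclidean_space set \<Rightarrow> 'a set \<Rightarrow> bool" where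
  "projectionally_exposed_face F K \<longleftrightarrow>
     (\<exists>P. linear P \<and> P \<circ> P = P \<and> P ` K = F)"

definition projectionally_exposed :: "'a::euclidean_space set \<Rightarrow> bool" where
  "projectionally_exposed K \<longleftrightarrow> (\<forall>F. is_face F K \<longrightarrow> projectionally_exposed_face F K)"

end

theory Submission
  imports Defs
begin

lemma infdist_geI:
  assumes "A \<noteq> {}" "\<And>a. a \<in> A \<Longrightarrow> d \<le> dist x a"
  shows "d \<le> infdist x A"
  using assms by (simp add: infdist_notempty cINF_greatest)

lemma infdist_ltE:
  assumes "A \<noteq> {}" "infdist x A < d"
  obtains a where "a \<in> A" "dist x a < d"
proof -
  have "bdd_below ((\<lambda>a. dist x a) ` A)" by (rule bdd_belowI[of _ 0]) auto
  then show ?thesis using assms that by (auto simp: infdist_notempty cINF_less_iff)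
qed

lemma open_segI:
  assumes "a \<noteq> b" "0 < u" "u < 1" "x = (1 - u) *\<^sub>R a + u *\<^sub>R b"
  shows "x \<in> open_segment a b"
  using assms by (auto simp: in_segment)

lemma cone_add:
  assumes "convex C" "cone C" "x \<in> C" "y \<in> C"
  shows "x + y \<in> C"
proof -
  have "(1/2) *\<^sub>R x + (1/2) *\<^sub>R y \<in> C"
    using assms by (intro convexD) auto
  then have "2 *\<^sub>R ((1/2) *\<^sub>R x + (1/2) *\<^sub>R y) \<in> C"
    using assms(2) by (simp add: cone_def)
  then show ?thesis by (simp add: scaleR_right_distrib)
qed

lemma face_zero:
  assumes "F face_of K" "cone K" "F \<noteq> {}"
  shows "0 \<in> F"
proof -
  obtain f where f: "f \<in> F" using assms by auto
  show ?thesis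
  proof (cases "f = 0")
    case True then show ?thesis using f by simp
  next
    case False
    have fK: "f \<in> K" using f assms face_of_imp_subset by blast
    have a: "0 \<in> K" using cone_contains_0[OF assms(2)] fK by blast
    have b: "2 *\<^sub>R f \<in> K" using mem_cone[OF assms(2) fK, of 2] by simp
    have ne: "0 \<noteq> 2 *\<^sub>R f" using False by simp
    have eq: "f = (1 - 1/2) *\<^sub>R 0 + (1/2) *\<^sub>R (2 *\<^sub>R f)" by simp
    have seg: "f \<in> open_segment 0 (2 *\<^sub>R f)"
      by (rule open_segI[OF ne _ _ eq]) auto
    show ?thesis using face_ofD[OF assms(1) seg a b f] by blast
  qed
qed

lemma face_cone:
  assumes "F face_of K" "cone K" "F \<noteq> {}"
  shows "cone F"
  unfolding cone_def
proof (intro ballI allI impI)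
  fix x and c :: real assume x: "x \<in> F" and c: "0 \<le> c"
  have z: "0 \<in> F" using face_zero assms by blast
  have cvx: "convex F" using assms face_of_imp_convex by blast
  have xK: "x \<in> K" using x assms face_of_imp_subset by blast
  show "c *\<^sub>R x \<in> F"
  proof (cases "c \<le> 1")
    case True
    then have "c *\<^sub>R x + (1 - c) *\<^sub>R 0 \<in> F" using cvx x z c by (intro convexD) auto
    then show ?thesis by simp
  next
    case False
    show ?thesis
    proof (cases "x = 0")
      case True then show ?thesis using z by simp
    next
      case x0: False
      have b: "c *\<^sub>R x \<in> K" using mem_cone[OF assms(2) xK c] .
      have a: "0 \<in> K" using z assms face_of_imp_subset by blast
      have ne: "x \<noteq> c *\<^sub>R x"
      proof
        assume "x = c *\<^sub>R x"
        then have "(c - 1) *\<^sub>R x = 0" by (simp add: algebra_simps)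
        then show False using False x0 by simp
      qed
      have ne2: "0 \<noteq> c *\<^sub>R x" using False x0 by simp
      have eq: "x = (1 - 1/c) *\<^sub>R 0 + (1/c) *\<^sub>R (c *\<^sub>R x)" using False by simp
      have seg: "x \<in> open_segment 0 (c *\<^sub>R x)"
        by (rule open_segI[OF ne2 _ _ eq]) (use False in auto)
      show ?thesis using face_ofD[OF assms(1) seg a b x] by blast
    qed
  qed
qed

lemma face_lin:
  fixes K :: "'a::real_vector set"
  assumes "F face_of K" "cone K" "F \<noteq> {}" "l \<in> K" "- l \<in> K"
  shows "l \<in> F"
proof (cases "l = 0")
  case True then show ?thesis using face_zero assms by simp
next
  case False
  have "l \<noteq> - l"
  proof
    assume "l = - l"
    then have "2 *\<^sub>R l = 0" by (metis add.right_inverse scaleR_2)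
    then show False using False by simp
  qed
  moreover have "(0::'a) = (1 - 1/2) *\<^sub>R l + (1/2) *\<^sub>R (- l)" by simp
  ultimately have seg: "0 \<in> open_segment l (- l)"
    by (intro open_segI[where u="1/2"]) auto
  have z: "0 \<in> F" using assms face_zero by blast
  show ?thesis using face_ofD[OF assms(1) seg assms(4,5) z] by blast
qed

lemma face_eq_span:
  fixes K :: "'a::euclidean_space set"
  assumes "F face_of K" "convex K" "cone K" "F \<noteq> {}"
  shows "F = K \<inter> span F"
proof -
  have "0 \<in> F" using face_zero assms by blast
  then have "affine hull F = span F" by (simp add: affine_hull_span_0 hull_inc)
  moreover have "F = affine hull F \<inter> K" using face_of_imp_eq_affine_Int[OF assms(2) assms(1)] .
  ultimately show ?thesis by (metis inf_commute)
qed

definition linsp :: "'a::real_vector set \<Rightarrow> 'a set" where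
  "linsp K = {x. x \<in> K \<and> - x \<in> K}"

lemma linsp_subspace:
  assumes "convex K" "cone K" "K \<noteq> {}"
  shows "subspace (linsp K)"
  unfolding subspace_def linsp_def
proof (intro conjI ballI allI)
  show "0 \<in> {x. x \<in> K \<and> - x \<in> K}" using cone_contains_0[OF assms(2)] assms(3) by simp
next
  fix x y assume x: "x \<in> {x. x \<in> K \<and> - x \<in> K}" and y: "y \<in> {x. x \<in> K \<and> - x \<in> K}"
  have "x + y \<in> K" using x y cone_add[OF assms(1,2)] by blast
  moreover have "- x + - y \<in> K" using x y cone_add[OF assms(1,2)] by blast
  ultimately show "x + y \<in> {x. x \<in> K \<and> - x \<in> K}" by (simp add: add.commute)
next
  fix c :: real and x assume x: "x \<in> {x. x \<in> K \<and> - x \<in> K}"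
  show "c *\<^sub>R x \<in> {x. x \<in> K \<and> - x \<in> K}"
  proof (cases "0 \<le> c")
    case True
    have "c *\<^sub>R x \<in> K" using x mem_cone[OF assms(2), of x c] True by auto
    moreover have "c *\<^sub>R (- x) \<in> K" using x mem_cone[OF assms(2), of "- x" c] True by auto
    ultimately show ?thesis by simp
  next
    case False
    have "(- c) *\<^sub>R (- x) \<in> K" using x mem_cone[OF assms(2), of "- x" "- c"] False by auto
    moreover have "(- c) *\<^sub>R x \<in> K" using x mem_cone[OF assms(2), of x "- c"] False by auto
    ultimately show ?thesis by simp
  qed
qed

lemma proj_exists:
  fixes L :: "'a::euclidean_space set"
  assumes "subspace L"
  obtains Q where "linear Q" "\<And>x. Q x \<in> L" "\<And>x. x \<in> L \<Longrightarrow> Q x = x"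
proof -
  obtain B where B: "B \<subseteq> L" "pairwise orthogonal B" "\<And>x. x \<in> B \<Longrightarrow> norm x = 1"
    "independent B" "card B = dim L" "span B = L"
    using orthonormal_basis_subspace[OF assms] by metis
  have fin: "finite B" using B(4) independent_imp_finite by blast
  define Q where "Q x = (\<Sum>b\<in>B. (x \<bullet> b) *\<^sub>R b)" for x
  have "linear Q"
    by (rule linearI) (simp_all add: Q_def inner_add_left scaleR_add_left sum.distrib scaleR_sum_right)
  moreover have "Q x \<in> L" for x
  proof -
    have "Q x \<in> span B" unfolding Q_def by (intro span_sum span_scale span_base)
    then show ?thesis using B(6) by simp
  qed
  moreover have "Q x = x" if "x \<in> L" for x
    unfolding Q_def using orthonormal_basis_expand[OF B(2) B(3)] that B(6) fin by auto
  ultimately show ?thesis using that by blast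
qed

lemma sep_cone:
  fixes C :: "'a::euclidean_space set"
  assumes "closed C" "convex C" "cone C" "C \<noteq> {}" "z \<notin> C"
  obtains a where "\<And>x. x \<in> C \<Longrightarrow> 0 \<le> a \<bullet> x" "a \<bullet> z < 0"
proof -
  obtain a b where ab: "a \<bullet> z < b" "\<And>x. x \<in> C \<Longrightarrow> a \<bullet> x > b"
    using separating_hyperplane_closed_point[OF assms(2,1,5)] by blast
  have "0 \<in> C" using cone_contains_0[OF assms(3)] assms(4) by simp
  then have b0: "b < 0" using ab(2)[of 0] by simp
  have "0 \<le> a \<bullet> x" if x: "x \<in> C" for x
  proof (rule ccontr)
    assume "\<not> 0 \<le> a \<bullet> x"
    then have neg: "a \<bullet> x < 0" by simp
    define t where "t = b / (a \<bullet> x)"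
    have t: "t \<ge> 0" unfolding t_def using neg b0 by (simp add: divide_nonpos_neg)
    have "t *\<^sub>R x \<in> C" using mem_cone[OF assms(3) x t] .
    then have "a \<bullet> (t *\<^sub>R x) > b" using ab(2) by blast
    moreover have "a \<bullet> (t *\<^sub>R x) = b" unfolding t_def using neg by simp
    ultimately show False by simp
  qed
  moreover have "a \<bullet> z < 0" using ab(1) b0 by linarith
  ultimately show ?thesis by (rule that)
qed

lemma fix_span:
  assumes "linear P" "P \<circ> P = P" "P ` K = F" "x \<in> span F"
  shows "P x = x"
proof -
  have "P y = y" if yF: "y \<in> F" for y
  proof -
    obtain k where "y = P k" using yF assms(3) by blast
    then show ?thesis using assms(2) by (metis comp_apply)
  qed
  then show ?thesis using linear_eq_on_span[OF assms(1) linear_id, of F x] assms(4) by simp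
qed

lemma pe_imp_amen:
  fixes K :: "'a::euclidean_space set"
  assumes "linear P" "P \<circ> P = P" "P ` K = F" "K \<noteq> {}"
  shows "\<exists>\<kappa>>0. \<forall>x\<in>span F. infdist x F \<le> \<kappa> * infdist x K"
proof -
  obtain B where B: "B > 0" "\<And>x. norm (P x) \<le> B * norm x"
    using linear_bounded_pos[OF assms(1)] by blast
  have "infdist x F \<le> B * infdist x K" if x: "x \<in> span F" for x
  proof -
    have "infdist x F / B \<le> infdist x K"
    proof (rule infdist_geI[OF assms(4)])
      fix k assume k: "k \<in> K"
      have "P k \<in> F" using k assms(3) by blast
      then have "infdist x F \<le> dist x (P k)" by (rule infdist_le)
      also have "dist x (P k) = norm (P (x - k))"
        using fix_span[OF assms(1-3) x] linear_diff[OF assms(1)] by (simp add: dist_norm)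
      also have "\<dots> \<le> B * dist x k" using B(2) by (simp add: dist_norm)
      finally show "infdist x F / B \<le> dist x k" using B(1) by (simp add: divide_le_eq mult.commute)
    qed
    then show ?thesis using B(1) by (simp add: divide_le_eq mult.commute)
  qed
  then show ?thesis using B(1) by blast
qed

lemma hyper_span:
  fixes u :: "'a::euclidean_space"
  assumes "span F \<subseteq> span K" "dim F + 1 = dim K" "u \<in> span K" "u \<noteq> 0"
    "\<And>y. y \<in> span F \<Longrightarrow> u \<bullet> y = 0" "x \<in> span K" "u \<bullet> x = 0"
  shows "x \<in> span F"
proof -
  define W where "W = span K \<inter> {x. u \<bullet> x = 0}"
  have sW: "subspace W" unfolding W_def by (intro subspace_inter subspace_span subspace_hyperplane)
  have FW: "span F \<subseteq> W" unfolding W_def using assms(1,5) by auto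
  have "u \<notin> W" unfolding W_def using assms(4) by simp
  moreover have "W \<subseteq> span K" unfolding W_def by auto
  ultimately have "W \<subset> span K" using assms(3) by blast
  moreover have "span W = W" using sW span_eq_iff by blast
  ultimately have "span W \<subset> span (span K)" by (metis span_span)
  then have "dim W < dim (span K)" by (rule dim_psubset)
  then have "dim W \<le> dim (span F)" using assms(2) by simp
  then have "span F = W" using subspace_dim_equal[OF subspace_span sW FW] by simp
  then show ?thesis using assms(6,7) unfolding W_def by simp
qed

lemma one_side:
  fixes K :: "'a::euclidean_space set"
  assumes "F face_of K" "convex K" "F = K \<inter> span F"
    "\<And>x. x \<in> span K \<Longrightarrow> u \<bullet> x = 0 \<Longrightarrow> x \<in> span F"
    "\<And>y. y \<in> span F \<Longrightarrow> u \<bullet> y = 0"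
    "k1 \<in> K" "k2 \<in> K" "u \<bullet> k1 > 0" "u \<bullet> k2 < 0"
  shows False
proof -
  define a where "a = - (u \<bullet> k2)"
  define b where "b = u \<bullet> k1"
  have a: "a > 0" and b: "b > 0" using assms(8,9) a_def b_def by auto
  define m where "m = (a/(a+b)) *\<^sub>R k1 + (b/(a+b)) *\<^sub>R k2"
  have "u \<bullet> m = (a/(a+b)) * b + (b/(a+b)) * (- a)"
  proof -
    have ua: "u \<bullet> k2 = - a" and ub: "u \<bullet> k1 = b" using a_def b_def by auto
    show ?thesis unfolding m_def inner_add_right inner_scaleR_right ua ub by simp
  qed
  also have "\<dots> = 0" by (simp add: field_simps)
  finally have um: "u \<bullet> m = 0" .
  have "m \<in> K" unfolding m_def
    using convexD[OF assms(2) assms(6,7), of "a/(a+b)" "b/(a+b)"] a b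
    by (simp add: add_divide_distrib[symmetric])
  moreover have "m \<in> span K" using calculation span_base by blast
  ultimately have mF: "m \<in> F" using assms(3,4) um by blast
  have ne: "k1 \<noteq> k2" using assms(8,9) by auto
  have "1 - b/(a+b) = a/(a+b)" using a b by (simp add: field_simps)
  then have eqm: "m = (1 - b/(a+b)) *\<^sub>R k1 + (b/(a+b)) *\<^sub>R k2"
    unfolding m_def by simp
  have seg: "m \<in> open_segment k1 k2"
    by (rule open_segI[OF ne _ _ eqm]) (use a b in auto)
  have "k1 \<in> F" using face_ofD[OF assms(1) seg assms(6,7) mF] by blast
  then have "u \<bullet> k1 = 0" using assms(5) span_base by blast
  then show False using assms(8) by simp
qed

lemma facet_pe:
  fixes K :: "'a::euclidean_space set"
  assumes K: "closed K" "convex K" "cone K" "K \<noteq> {}"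
    and F: "is_face F K" and d: "dim F + 1 = dim K"
    and kp: "\<kappa> > 0" and am: "\<forall>x\<in>span F. infdist x F \<le> \<kappa> * infdist x K"
  shows "projectionally_exposed_face F K"
proof -
  have Ff: "F face_of K" and Fc: "closed F" and Fne: "F \<noteq> {}" using F unfolding is_face_def by auto
  have FK: "F \<subseteq> K" using Ff face_of_imp_subset by blast
  have FKs: "F = K \<inter> span F" using face_eq_span[OF Ff K(2,3) Fne] .
  have Fcv: "convex F" using Ff face_of_imp_convex by blast
  have Fcone: "cone F" using face_cone[OF Ff K(3) Fne] .
  have ssub: "span F \<subseteq> span K" using FK span_mono by blast
  have "span F \<noteq> span K" using d by (metis dim_span add_le_same_cancel1 le_refl not_one_le_zero)
  then have "span F \<subset> span K" using ssub by blast
  then obtain u0 where u0: "u0 \<noteq> 0" "u0 \<in> span K" "\<And>y. y \<in> span F \<Longrightarrow> orthogonal u0 y"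
    using orthogonal_to_subspace_exists_gen by metis
  have u0o: "\<And>y. y \<in> span F \<Longrightarrow> u0 \<bullet> y = 0" using u0(3) unfolding orthogonal_def by blast
  have hyp0: "\<And>x. x \<in> span K \<Longrightarrow> u0 \<bullet> x = 0 \<Longrightarrow> x \<in> span F"
    using hyper_span[OF ssub d u0(2) u0(1) u0o] by blast
  have side: "(\<forall>k\<in>K. 0 \<le> u0 \<bullet> k) \<or> (\<forall>k\<in>K. u0 \<bullet> k \<le> 0)"
  proof (rule ccontr)
    assume "\<not> ?thesis"
    then obtain k1 k2 where "k1 \<in> K" "k2 \<in> K" "u0 \<bullet> k1 > 0" "u0 \<bullet> k2 < 0"
      by (metis linorder_not_le)
    then show False using one_side[OF Ff K(2) FKs hyp0 u0o] by blast
  qed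
  obtain s where s: "s = 1 \<or> s = -1" "\<forall>k\<in>K. 0 \<le> s * (u0 \<bullet> k)"
    using side by (metis mult_1 mult_minus1 neg_0_le_iff_le)
  define u where "u = (s / norm u0) *\<^sub>R u0"
  have sn: "s \<noteq> 0" using s(1) by auto
  have un: "norm u = 1" unfolding u_def using s(1) u0(1) by auto
  have uK: "u \<in> span K" unfolding u_def using u0(2) span_scale by blast
  have upos: "\<And>k. k \<in> K \<Longrightarrow> 0 \<le> u \<bullet> k"
    unfolding u_def using s(2) by (simp add: mult.commute)
  have uo: "\<And>y. y \<in> span F \<Longrightarrow> u \<bullet> y = 0" unfolding u_def using u0o by simp
  have hyp: "\<And>x. x \<in> span K \<Longrightarrow> u \<bullet> x = 0 \<Longrightarrow> x \<in> span F"
    using hyp0 sn u0(1) unfolding u_def by simp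
  have uu: "u \<bullet> u = 1" using un by (simp add: norm_eq_1)
    have "rel_interior F \<noteq> {}" using rel_interior_eq_empty Fcv Fne by blast
  then obtain z where z: "z \<in> rel_interior F" by blast
  then obtain \<rho> where rho: "\<rho> > 0" "ball z \<rho> \<inter> affine hull F \<subseteq> F"
    using mem_rel_interior_ball by blast
  have "0 \<in> F" using face_zero[OF Ff K(3) Fne] .
  then have ahF: "affine hull F = span F" by (simp add: affine_hull_span_0 hull_inc)
  have zF: "z \<in> F" using z rel_interior_subset by blast
  have uz: "u \<bullet> z = 0" using uo zF span_base by blast
  define r where "r = 4 * \<kappa> / \<rho>"
  have r: "r > 0" unfolding r_def using kp rho by simp
  define w where "w = u - r *\<^sub>R z"
  have uw: "u \<bullet> w = 1" unfolding w_def using uu uz by (simp add: inner_diff_right)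
  define P where "P x = x - (u \<bullet> x) *\<^sub>R w" for x
  have linP: "linear P"
    by (rule linearI) (simp_all add: P_def inner_add_right algebra_simps)
  have PP: "P \<circ> P = P"
  proof
    fix x
    have "u \<bullet> P x = 0" unfolding P_def using uw by (simp add: inner_diff_right)
    then show "(P \<circ> P) x = P x" by (simp add: P_def)
  qed
  have PF: "P f = f" if "f \<in> F" for f
    using uo[of f] that span_base unfolding P_def by auto
  have PK: "P k \<in> F" if k: "k \<in> K" for k
  proof -
    define t where "t = u \<bullet> k"
    have t0: "t \<ge> 0" unfolding t_def using upos k by blast
    show ?thesis
    proof (cases "t = 0")
      case True
      then have "k \<in> span F" using hyp k span_base unfolding t_def by blast
      then have "k \<in> F" using FKs k by blast
      then show ?thesis using PF by simp
    next
      case False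
      then have tp: "t > 0" using t0 by simp
      define x where "x = k - t *\<^sub>R u"
      have xK: "x \<in> span K" unfolding x_def using k uK by (metis span_base span_diff span_scale)
      have "u \<bullet> x = 0" unfolding x_def t_def using uu by (simp add: inner_diff_right)
      then have xF: "x \<in> span F" using hyp xK by blast
      have "infdist x K \<le> dist x k" using infdist_le k by blast
      also have "dist x k = t" unfolding x_def using un tp by (simp add: dist_norm)
      finally have "infdist x K \<le> t" .
      then have "infdist x F \<le> \<kappa> * t" using am xF kp by (meson mult_left_mono order_trans less_imp_le)
      also have "\<dots> < 2 * \<kappa> * t" using kp tp by simp
      finally obtain f where f: "f \<in> F" "dist x f < 2 * \<kappa> * t" using infdist_ltE[OF Fne] by blast
      define e where "e = x - f"
      have eF: "e \<in> span F" unfolding e_def using xF f(1) by (metis span_base span_diff)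
      have en: "norm e < 2 * \<kappa> * t" using f(2) unfolding e_def by (simp add: dist_norm)
      define v where "v = z + (1 / (t * r)) *\<^sub>R e"
      have "dist z v = norm e / (t * r)" unfolding v_def using tp r by (simp add: dist_norm)
      also have "\<dots> < (2 * \<kappa> * t) / (t * r)" using en tp r by (intro divide_strict_right_mono) auto
      also have "(2 * \<kappa> * t) / (t * r) = \<rho> / 2" unfolding r_def using tp kp rho by (simp add: field_simps)
      finally have "dist z v < \<rho>" using rho by simp
      moreover have "v \<in> span F" unfolding v_def using zF eF by (metis span_base span_add span_scale)
      ultimately have vF: "v \<in> F" using rho(2) ahF by auto
      have "P k = f + (t * r) *\<^sub>R v"
        unfolding P_def v_def w_def e_def x_def t_def using tp r
        by (simp add: algebra_simps t_def[symmetric])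
      moreover have "(t * r) *\<^sub>R v \<in> F" using mem_cone[OF Fcone vF] tp r by simp
      ultimately show ?thesis using cone_add[OF Fcv Fcone f(1)] by simp
    qed
  qed
  have "P ` K = F"
  proof
    show "P ` K \<subseteq> F" using PK by blast
    show "F \<subseteq> P ` K"
    proof
      fix f assume "f \<in> F"
      then show "f \<in> P ` K" using PF FK by (metis image_eqI subsetD)
    qed
  qed
  then show ?thesis unfolding projectionally_exposed_face_def using linP PP by blast
qed

lemma linsp_sub_face:
  assumes "F face_of K" "cone K" "F \<noteq> {}"
  shows "linsp K \<subseteq> F"
  using face_lin[OF assms] unfolding linsp_def by blast

lemma lin_face_pe:
  fixes K :: "'a::euclidean_space set"
  assumes K: "closed K" "convex K" "cone K" "K \<noteq> {}"
    and F: "is_face F K" and d: "dim F \<le> dim (linsp K)"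
  shows "projectionally_exposed_face F K"
proof -
  have Ff: "F face_of K" and Fne: "F \<noteq> {}" using F unfolding is_face_def by auto
  have sL: "subspace (linsp K)" using linsp_subspace[OF K(2,3,4)] .
  have LF: "linsp K \<subseteq> F" using linsp_sub_face[OF Ff K(3) Fne] .
  have "linsp K \<subseteq> span F" using LF span_superset by blast
  then have "linsp K = span F"
    using subspace_dim_equal[OF sL subspace_span] d by simp
  then have FL: "F = linsp K" using LF span_superset by blast
  obtain Q where Q: "linear Q" "\<And>x. Q x \<in> linsp K" "\<And>x. x \<in> linsp K \<Longrightarrow> Q x = x"
    using proj_exists[OF sL] by blast
  have "Q \<circ> Q = Q" using Q by (auto simp: fun_eq_iff)
  moreover have "Q ` K = F"
  proof
    show "Q ` K \<subseteq> F" using Q(2) FL by blast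
    show "F \<subseteq> Q ` K"
    proof
      fix x assume "x \<in> F"
      then have "x \<in> linsp K" "x \<in> K" using FL unfolding linsp_def by auto
      then show "x \<in> Q ` K" using Q(3) by (metis image_eqI)
    qed
  qed
  ultimately show ?thesis unfolding projectionally_exposed_face_def using Q(1) by blast
qed

lemma ray_face_pe:
  fixes K :: "'a::euclidean_space set"
  assumes K: "closed K" "convex K" "cone K" "K \<noteq> {}"
    and F: "is_face F K" and d: "dim F = dim (linsp K) + 1"
  shows "projectionally_exposed_face F K"
proof -
  let ?L = "linsp K"
  have Ff: "F face_of K" and Fne: "F \<noteq> {}" using F unfolding is_face_def by auto
  have FK: "F \<subseteq> K" using Ff face_of_imp_subset by blast
  have Fcv: "convex F" using Ff face_of_imp_convex by blast
  have Fcone: "cone F" using face_cone[OF Ff K(3) Fne] .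
  have sL: "subspace ?L" using linsp_subspace[OF K(2,3,4)] .
  have LF: "?L \<subseteq> F" using linsp_sub_face[OF Ff K(3) Fne] .
  have spL: "span ?L = ?L" using sL span_eq_iff by blast
  have "\<not> F \<subseteq> ?L"
  proof
    assume "F \<subseteq> ?L"
    then have "dim F \<le> dim ?L" by (rule dim_subset)
    then show False using d by simp
  qed
  then obtain f0 where f0: "f0 \<in> F" "f0 \<notin> ?L" by blast
  obtain Q where Q: "linear Q" "\<And>x. Q x \<in> ?L" "\<And>x. x \<in> ?L \<Longrightarrow> Q x = x"
    using proj_exists[OF sL] by blast
  define f where "f = f0 - Q f0"
  have "- Q f0 \<in> ?L" using Q(2) sL subspace_neg by blast
  then have "- Q f0 \<in> F" using LF by blast
  then have "f0 + - Q f0 \<in> F" using cone_add[OF Fcv Fcone f0(1)] by blast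
  then have fF: "f \<in> F" unfolding f_def by simp
  have fL: "f \<notin> ?L"
  proof
    assume "f \<in> ?L"
    then have "f + Q f0 \<in> ?L" using Q(2) sL subspace_add by blast
    then show False using f0(2) unfolding f_def by simp
  qed
  have Qf: "Q f = 0" unfolding f_def using Q(1,2,3) by (simp add: linear_diff)
  have "span (insert f ?L) = span (span F)"
  proof (rule dim_eq_span)
    show "insert f ?L \<subseteq> span F" using fF LF span_superset by blast
    have "f \<notin> span ?L" using fL spL by metis
    then have "dim (insert f ?L) = dim ?L + 1" by (simp add: dim_insert)
    then show "dim (span F) \<le> dim (insert f ?L)" using d by simp
  qed
  then have "span (insert f ?L) = span F" by simp
  then have decomp: "\<exists>t\<ge>0. x - t *\<^sub>R f \<in> ?L" if x: "x \<in> F" for x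
  proof -
    have "x \<in> span (insert f ?L)" using x span_superset \<open>span (insert f ?L) = span F\<close> by blast
    then obtain t where t: "x - t *\<^sub>R f \<in> ?L" using span_breakdown_eq spL by metis
    have "t \<ge> 0"
    proof (rule ccontr)
      assume tn: "\<not> t \<ge> 0"
      have "- (x - t *\<^sub>R f) \<in> ?L" using t sL subspace_neg by blast
      then have "- (x - t *\<^sub>R f) \<in> F" using LF by blast
      then have "x + - (x - t *\<^sub>R f) \<in> F" using cone_add[OF Fcv Fcone x] by blast
      then have "t *\<^sub>R f \<in> F" by simp
      moreover have "- 1 / t \<ge> 0" using tn by simp
      ultimately have "(- 1 / t) *\<^sub>R (t *\<^sub>R f) \<in> F" using mem_cone[OF Fcone] by blast
      moreover have "(- 1 / t) *\<^sub>R (t *\<^sub>R f) = - f" using tn by simp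
      ultimately have "- f \<in> F" by simp
      then have "f \<in> ?L" using fF FK unfolding linsp_def by auto
      then show False using fL by simp
    qed
    then show ?thesis using t by blast
  qed
  have "- f \<notin> K" using fL fF FK unfolding linsp_def by auto
  then obtain a where a: "\<And>x. x \<in> K \<Longrightarrow> 0 \<le> a \<bullet> x" "a \<bullet> (- f) < 0"
    using sep_cone[OF K(1,2,3,4)] by blast
  have af: "a \<bullet> f > 0" using a(2) by simp
  have aL: "a \<bullet> l = 0" if "l \<in> ?L" for l
  proof -
    have lK: "l \<in> K" "- l \<in> K" using that unfolding linsp_def by auto
    have "0 \<le> a \<bullet> l" using a(1)[OF lK(1)] .
    moreover have "0 \<le> a \<bullet> (- l)" using a(1)[OF lK(2)] .
    ultimately show ?thesis by (simp add: inner_minus_right)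
  qed
  define P where "P x = Q x + ((a \<bullet> x) / (a \<bullet> f)) *\<^sub>R f" for x
  have linP: "linear P"
    by (rule linearI) (simp_all add: P_def linear_add[OF Q(1)] linear_scale[OF Q(1)]
        inner_add_right add_divide_distrib scaleR_add_left algebra_simps)
  have PL: "P l = l" if "l \<in> ?L" for l using that Q(3) aL unfolding P_def by simp
  have Pf: "P f = f" unfolding P_def using Qf af by simp
  have PP: "P \<circ> P = P"
  proof
    fix x
    have "P (P x) = P (Q x) + ((a \<bullet> x) / (a \<bullet> f)) *\<^sub>R P f"
      unfolding P_def[of x] using linP by (simp add: linear_add linear_scale)
    also have "\<dots> = P x" using PL[OF Q(2)] Pf by (simp add: P_def)
    finally show "(P \<circ> P) x = P x" by simp
  qed
  have "P ` K = F"
  proof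
    show "P ` K \<subseteq> F"
    proof
      fix y assume "y \<in> P ` K"
      then obtain k where k: "k \<in> K" "y = P k" by blast
      have c: "(a \<bullet> k) / (a \<bullet> f) \<ge> 0" using a(1)[OF k(1)] af by simp
      have "Q k \<in> F" using Q(2) LF by blast
      moreover have "((a \<bullet> k) / (a \<bullet> f)) *\<^sub>R f \<in> F" using mem_cone[OF Fcone fF c] .
      ultimately show "y \<in> F" using k(2) cone_add[OF Fcv Fcone] unfolding P_def by blast
    qed
    show "F \<subseteq> P ` K"
    proof
      fix x assume x: "x \<in> F"
      then obtain t where t: "x - t *\<^sub>R f \<in> ?L" using decomp by blast
      have "P x = P (x - t *\<^sub>R f) + t *\<^sub>R P f" using linP by (simp add: linear_diff linear_scale)
      also have "\<dots> = x" using PL[OF t] Pf by simp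
      finally show "x \<in> P ` K" using x FK by (metis image_eqI subsetD)
    qed
  qed
  then show ?thesis unfolding projectionally_exposed_face_def using linP PP by blast
qed

lemma exist_phi:
  fixes K :: "'a::euclidean_space set"
  assumes K: "closed K" "convex K" "cone K" "K \<noteq> {}"
    and FK: "F \<subseteq> K" and pF: "p \<in> F" and qF: "q \<in> F"
    and gen: "\<And>y. y \<in> F \<Longrightarrow> \<exists>\<alpha> \<beta>. \<alpha> \<ge> 0 \<and> \<beta> \<ge> 0 \<and> y = \<alpha> *\<^sub>R p + \<beta> *\<^sub>R q"
    and qp: "q \<notin> span {p}"
    and kp: "\<kappa> > 0" and am: "\<forall>x\<in>span F. infdist x F \<le> \<kappa> * infdist x K"
  obtains a where "\<And>x. x \<in> K \<Longrightarrow> 0 \<le> a \<bullet> x" "a \<bullet> p = 0" "a \<bullet> q > 0"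
proof -
  define w where "w = q - ((q \<bullet> p) / (p \<bullet> p)) *\<^sub>R p"
  have wp: "w \<bullet> p = 0"
  proof (cases "p = 0")
    case True then show ?thesis by simp
  next
    case False then show ?thesis unfolding w_def by (simp add: inner_diff_left)
  qed
  have wne: "w \<noteq> 0"
  proof
    assume "w = 0"
    then have "q = ((q \<bullet> p) / (p \<bullet> p)) *\<^sub>R p" unfolding w_def by simp
    then have "q \<in> span {p}" by (metis span_base span_scale singletonI)
    then show False using qp by simp
  qed
  have qw: "q \<bullet> w = w \<bullet> w"
  proof -
    have "q = w + ((q \<bullet> p) / (p \<bullet> p)) *\<^sub>R p" unfolding w_def by simp
    then have "q \<bullet> w = (w + ((q \<bullet> p) / (p \<bullet> p)) *\<^sub>R p) \<bullet> w" by simp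
    also have "\<dots> = w \<bullet> w + ((q \<bullet> p) / (p \<bullet> p)) * (p \<bullet> w)" by (simp add: inner_add_left)
    also have "\<dots> = w \<bullet> w" using wp by (simp add: inner_commute)
    finally show ?thesis .
  qed
  have pw: "p \<bullet> w = 0" using wp by (simp add: inner_commute)
  have ww: "w \<bullet> w = norm w * norm w" by (simp add: power2_norm_eq_inner[symmetric] power2_eq_square)
  have nw: "norm w > 0" using wne by simp
  have yw: "y \<bullet> w \<ge> 0" if yF: "y \<in> F" for y
  proof -
    obtain \<alpha> \<beta> where ab: "\<alpha> \<ge> 0" "\<beta> \<ge> 0" "y = \<alpha> *\<^sub>R p + \<beta> *\<^sub>R q" using gen[OF yF] by blast
    have "y \<bullet> w = \<alpha> * (p \<bullet> w) + \<beta> * (q \<bullet> w)" using ab(3) by (simp add: inner_add_left)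
    then have "y \<bullet> w = \<beta> * (w \<bullet> w)" using pw qw by simp
    then show ?thesis using ab(2) by simp
  qed
  define \<delta> where "\<delta> = norm w / \<kappa>"
  have dpos: "\<delta> > 0" unfolding \<delta>_def using nw kp by simp
  have farK: "\<delta> \<le> infdist (- q + t *\<^sub>R p) K" for t
  proof -
    let ?x = "- q + t *\<^sub>R p"
    have "norm w \<le> infdist ?x F"
    proof (rule infdist_geI)
      show "F \<noteq> {}" using pF by blast
      fix y assume y: "y \<in> F"
      have "(y - ?x) \<bullet> w = y \<bullet> w + q \<bullet> w - t * (p \<bullet> w)"
        by (simp add: inner_diff_left inner_add_left)
      then have "(y - ?x) \<bullet> w = y \<bullet> w + w \<bullet> w" using pw qw by simp
      then have "norm w * norm w \<le> (y - ?x) \<bullet> w" using yw[OF y] ww by simp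
      also have "\<dots> \<le> norm (y - ?x) * norm w" using norm_cauchy_schwarz by blast
      finally have "norm w \<le> norm (y - ?x)" using nw by simp
      then show "norm w \<le> dist ?x y" by (simp add: dist_norm norm_minus_commute)
    qed
    moreover have "?x \<in> span F" using pF qF
      by (metis span_base span_add span_neg span_scale)
    ultimately have "norm w \<le> \<kappa> * infdist ?x K" using am by (meson order_trans)
    then show ?thesis unfolding \<delta>_def using kp by (simp add: divide_le_eq mult.commute)
  qed
  define C0 where "C0 = (\<Union>x\<in>K. \<Union>y\<in>span {p}. {x + y})"
  have cvC0: "convex C0" unfolding C0_def using convex_sums[OF K(2) subspace_imp_convex[OF subspace_span]] .
  have coneC0: "cone C0" unfolding cone_def C0_def
  proof (intro ballI allI impI)
    fix z and c :: real assume z: "z \<in> (\<Union>x\<in>K. \<Union>y\<in>span {p}. {x + y})" and c: "0 \<le> c"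
    then obtain x y where xy: "x \<in> K" "y \<in> span {p}" "z = x + y" by blast
    have "c *\<^sub>R x \<in> K" using mem_cone[OF K(3) xy(1) c] .
    moreover have "c *\<^sub>R y \<in> span {p}" using xy(2) span_scale by blast
    ultimately show "c *\<^sub>R z \<in> (\<Union>x\<in>K. \<Union>y\<in>span {p}. {x + y})" using xy(3)
      by (auto simp: scaleR_add_right)
  qed
  have KC0: "K \<subseteq> C0" unfolding C0_def using span_zero by force
  have z0: "0 \<in> K" using cone_contains_0[OF K(3)] K(4) by simp
  have ps: "p \<in> span {p}" "- p \<in> span {p}" by (auto intro: span_base span_neg)
  have "0 + p \<in> C0" "0 + - p \<in> C0" unfolding C0_def using z0 ps by blast+
  then have pC0: "p \<in> C0" "- p \<in> C0" by simp_all
  let ?C = "closure C0"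
  have "- q \<notin> ?C"
  proof
    assume "- q \<in> ?C"
    then obtain c where c: "c \<in> C0" "dist c (- q) < \<delta>" using dpos closure_approachable by blast
    then obtain k y where ky: "k \<in> K" "y \<in> span {p}" "c = k + y" unfolding C0_def by blast
    obtain s where s: "y = s *\<^sub>R p" using ky(2) by (auto simp: span_singleton)
    have "infdist (- q + (- s) *\<^sub>R p) K \<le> dist (- q + (- s) *\<^sub>R p) k" using infdist_le ky(1) by blast
    also have "\<dots> = dist c (- q)"
    proof -
      have "- q + (- s) *\<^sub>R p - k = - (c - (- q))" using ky(3) s by (simp add: algebra_simps)
      then show ?thesis by (simp only: dist_norm norm_minus_cancel)
    qed
    finally have "infdist (- q + (- s) *\<^sub>R p) K < \<delta>" using c(2) by simp
    then show False using farK[of "- s"] by simp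
  qed
  moreover have "closed ?C" by simp
  moreover have "convex ?C" using convex_closure[OF cvC0] .
  moreover have "cone ?C" using cone_closure[OF coneC0] .
  moreover have "?C \<noteq> {}" using KC0 K(4) closure_subset by blast
  ultimately obtain a where a: "\<And>x. x \<in> ?C \<Longrightarrow> 0 \<le> a \<bullet> x" "a \<bullet> (- q) < 0"
    using sep_cone by metis
  have aC0: "\<And>x. x \<in> C0 \<Longrightarrow> 0 \<le> a \<bullet> x" using a(1) closure_subset by blast
  have "a \<bullet> p = 0" using aC0[OF pC0(1)] aC0[OF pC0(2)] by simp
  moreover have "a \<bullet> q > 0" using a(2) by simp
  moreover have "\<And>x. x \<in> K \<Longrightarrow> 0 \<le> a \<bullet> x" using aC0 KC0 by blast
  ultimately show ?thesis using that by blast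
qed

lemma two_pe:
  fixes K :: "'a::euclidean_space set"
  assumes K: "closed K" "convex K" "cone K" "K \<noteq> {}"
    and Ff: "F face_of K" and Fne: "F \<noteq> {}" and pF: "p \<in> F" and qF: "q \<in> F"
    and gen: "\<And>y. y \<in> F \<Longrightarrow> \<exists>\<alpha> \<beta>. \<alpha> \<ge> 0 \<and> \<beta> \<ge> 0 \<and> y = \<alpha> *\<^sub>R p + \<beta> *\<^sub>R q"
    and qp: "q \<notin> span {p}" and pq: "p \<notin> span {q}"
    and kp: "\<kappa> > 0" and am: "\<forall>x\<in>span F. infdist x F \<le> \<kappa> * infdist x K"
  shows "projectionally_exposed_face F K"
proof -
  have FK: "F \<subseteq> K" using Ff face_of_imp_subset by blast
  have Fcv: "convex F" using Ff face_of_imp_convex by blast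
  have Fcone: "cone F" using face_cone[OF Ff K(3) Fne] .
  obtain a where a: "\<And>x. x \<in> K \<Longrightarrow> 0 \<le> a \<bullet> x" "a \<bullet> p = 0" "a \<bullet> q > 0"
    using exist_phi[OF K FK pF qF gen qp kp am] by blast
  have gen': "\<And>y. y \<in> F \<Longrightarrow> \<exists>\<alpha> \<beta>. \<alpha> \<ge> 0 \<and> \<beta> \<ge> 0 \<and> y = \<alpha> *\<^sub>R q + \<beta> *\<^sub>R p"
    using gen by (metis add.commute)
  obtain b where b: "\<And>x. x \<in> K \<Longrightarrow> 0 \<le> b \<bullet> x" "b \<bullet> q = 0" "b \<bullet> p > 0"
    using exist_phi[OF K FK qF pF gen' pq kp am] by blast
  define P where "P x = ((b \<bullet> x) / (b \<bullet> p)) *\<^sub>R p + ((a \<bullet> x) / (a \<bullet> q)) *\<^sub>R q" for x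
  have linP: "linear P"
    by (rule linearI) (simp_all add: P_def inner_add_right add_divide_distrib scaleR_add_left algebra_simps)
  have Pp: "P p = p" unfolding P_def using a(2) b(3) by simp
  have Pq: "P q = q" unfolding P_def using a(3) b(2) by simp
  have PP: "P \<circ> P = P"
  proof
    fix x
    have "P (P x) = ((b \<bullet> x) / (b \<bullet> p)) *\<^sub>R P p + ((a \<bullet> x) / (a \<bullet> q)) *\<^sub>R P q"
      unfolding P_def[of x] using linP by (simp add: linear_add linear_scale)
    also have "\<dots> = P x" using Pp Pq by (simp add: P_def)
    finally show "(P \<circ> P) x = P x" by simp
  qed
  have "P ` K = F"
  proof
    show "P ` K \<subseteq> F"
    proof
      fix y assume "y \<in> P ` K"
      then obtain k where k: "k \<in> K" "y = P k" by blast
      have c1: "(b \<bullet> k) / (b \<bullet> p) \<ge> 0" using b(1)[OF k(1)] b(3) by simp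
      have c2: "(a \<bullet> k) / (a \<bullet> q) \<ge> 0" using a(1)[OF k(1)] a(3) by simp
      have "((b \<bullet> k) / (b \<bullet> p)) *\<^sub>R p \<in> F" using mem_cone[OF Fcone pF c1] .
      moreover have "((a \<bullet> k) / (a \<bullet> q)) *\<^sub>R q \<in> F" using mem_cone[OF Fcone qF c2] .
      ultimately show "y \<in> F" using k(2) cone_add[OF Fcv Fcone] unfolding P_def by blast
    qed
    show "F \<subseteq> P ` K"
    proof
      fix x assume x: "x \<in> F"
      then obtain \<alpha> \<beta> where ab: "x = \<alpha> *\<^sub>R p + \<beta> *\<^sub>R q" using gen by blast
      have "P x = \<alpha> *\<^sub>R P p + \<beta> *\<^sub>R P q" unfolding ab using linP by (simp add: linear_add linear_scale)
      also have "\<dots> = x" using Pp Pq ab by simp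
      finally show "x \<in> P ` K" using x FK by (metis image_eqI subsetD)
    qed
  qed
  then show ?thesis unfolding projectionally_exposed_face_def using linP PP by blast
qed

lemma cone_sum:
  assumes "convex C" "cone C" "0 \<in> C" "finite A" "\<And>v. v \<in> A \<Longrightarrow> v \<in> C" "\<And>v. v \<in> A \<Longrightarrow> c v \<ge> 0"
  shows "(\<Sum>v\<in>A. c v *\<^sub>R v) \<in> C"
  using assms(4-6)
proof (induction A rule: finite_induct)
  case empty then show ?case using assms(3) by simp
next
  case (insert x F)
  have "c x *\<^sub>R x \<in> C" using mem_cone[OF assms(2)] insert.prems by simp
  moreover have "(\<Sum>v\<in>F. c v *\<^sub>R v) \<in> C" using insert by simp
  ultimately show ?case using insert.hyps cone_add[OF assms(1,2)] by simp
qed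

lemma pointed_psi:
  fixes C :: "'a::euclidean_space set"
  assumes C: "closed C" "convex C" "cone C" "C \<noteq> {}"
    and pt: "\<And>x. x \<in> C \<Longrightarrow> - x \<in> C \<Longrightarrow> x = 0"
  obtains \<psi> where "\<And>x. x \<in> C \<Longrightarrow> norm x \<le> \<psi> \<bullet> x"
proof -
  have z0: "0 \<in> C" using cone_contains_0[OF C(3)] C(4) by simp
  define S where "S = C \<inter> sphere 0 1"
  have nS: "x /\<^sub>R norm x \<in> S" if "x \<in> C" "x \<noteq> 0" for x
    using that mem_cone[OF C(3), of x "1 / norm x"] unfolding S_def by (simp add: inverse_eq_divide)
  show ?thesis
  proof (cases "S = {}")
    case True
    then have "x = 0" if "x \<in> C" for x using nS that by blast
    then have "norm x \<le> 0 \<bullet> x" if "x \<in> C" for x using that by simp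
    then show ?thesis using that by blast
  next
    case False
    define D where "D = convex hull S"
    have cS: "compact S" unfolding S_def using C(1) by (intro closed_Int_compact) auto
    have cD: "compact D" unfolding D_def using compact_convex_hull[OF cS] .
    have n0: "0 \<notin> D"
    proof
      assume "0 \<in> D"
      then obtain s u where su: "finite s" "s \<subseteq> S" "\<forall>x\<in>s. 0 \<le> u x" "sum u s = 1"
        "(\<Sum>v\<in>s. u v *\<^sub>R v) = 0"
        unfolding D_def convex_hull_explicit by blast
      have "\<exists>y\<in>s. u y > 0"
      proof (rule ccontr)
        assume "\<not> ?thesis"
        then have "\<forall>y\<in>s. u y = 0" using su(3) by (meson antisym not_le)
        then have "sum u s = 0" by simp
        then show False using su(4) by simp
      qed
      then obtain y where y: "y \<in> s" "u y > 0" by blast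
      have yC: "y \<in> C" and ny: "norm y = 1" using y(1) su(2) unfolding S_def by auto
      have "(\<Sum>v\<in>s. u v *\<^sub>R v) = u y *\<^sub>R y + (\<Sum>v\<in>s - {y}. u v *\<^sub>R v)"
        using sum.remove[OF su(1) y(1)] by simp
      then have e0: "u y *\<^sub>R y + (\<Sum>v\<in>s - {y}. u v *\<^sub>R v) = 0" using su(5) by simp
      have "(\<Sum>v\<in>s - {y}. u v *\<^sub>R v) = (u y *\<^sub>R y + (\<Sum>v\<in>s - {y}. u v *\<^sub>R v)) - u y *\<^sub>R y"
        by simp
      also have "\<dots> = - (u y *\<^sub>R y)" unfolding e0 by simp
      finally have r: "(\<Sum>v\<in>s - {y}. u v *\<^sub>R v) = - (u y *\<^sub>R y)" .
      have "(\<Sum>v\<in>s - {y}. u v *\<^sub>R v) \<in> C"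
        using su(1,2,3) unfolding S_def by (intro cone_sum[OF C(2,3) z0]) auto
      then have "- (u y *\<^sub>R y) \<in> C" using r by simp
      moreover have "1 / u y \<ge> 0" using y(2) by simp
      ultimately have "(1 / u y) *\<^sub>R (- (u y *\<^sub>R y)) \<in> C" using mem_cone[OF C(3)] by blast
      moreover have "(1 / u y) *\<^sub>R (- (u y *\<^sub>R y)) = - y" using y(2) by simp
      ultimately have "- y \<in> C" by simp
      then have "y = 0" using pt yC by blast
      then show False using ny by simp
    qed
    have cvD: "convex D" unfolding D_def by (rule convex_convex_hull)
    have clD: "closed D" using compact_imp_closed[OF cD] .
    have "\<exists>a b. a \<noteq> 0 \<and> 0 < b \<and> (\<forall>x\<in>D. inner a x > b)"
      by (rule separating_hyperplane_closed_0[OF cvD clD n0])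
    then obtain a b where ab: "a \<noteq> 0" "0 < b" "\<forall>x\<in>D. a \<bullet> x > b" by blast
    have "norm x \<le> ((1 / b) *\<^sub>R a) \<bullet> x" if x: "x \<in> C" for x
    proof (cases "x = 0")
      case True then show ?thesis by simp
    next
      case False
      have xD: "x /\<^sub>R norm x \<in> D" unfolding D_def by (rule hull_inc[OF nS[OF x False]])
      have gt: "a \<bullet> (x /\<^sub>R norm x) > b" using bspec[OF ab(3) xD] .
      have eqx: "a \<bullet> x = norm x * (a \<bullet> (x /\<^sub>R norm x))" using False by simp
      have np: "norm x > 0" using False by simp
      have "norm x * b < norm x * (a \<bullet> (x /\<^sub>R norm x))" using mult_strict_left_mono[OF gt np] .
      then have "norm x * b < a \<bullet> x" using eqx by linarith
      then have "norm x \<le> (a \<bullet> x) / b" using ab(2) by (simp add: pos_le_divide_eq)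
      then show ?thesis by (simp add: inner_scaleR_left)
    qed
    then show ?thesis by (rule that)
  qed
qed

lemma dim_single_le: "dim {p::'a::euclidean_space} \<le> 1"
  by (simp add: dim_insert)

lemma two_gen:
  fixes F :: "'a::euclidean_space set"
  assumes F: "closed F" "convex F" "cone F" "F \<noteq> {}"
    and pt: "\<And>x. x \<in> F \<Longrightarrow> - x \<in> F \<Longrightarrow> x = 0"
    and d: "dim F = 2"
  obtains p q where "p \<in> F" "q \<in> F"
    "\<And>y. y \<in> F \<Longrightarrow> \<exists>\<alpha> \<beta>. \<alpha> \<ge> 0 \<and> \<beta> \<ge> 0 \<and> y = \<alpha> *\<^sub>R p + \<beta> *\<^sub>R q"
    "q \<notin> span {p}" "p \<notin> span {q}"
proof -
  obtain \<psi> where psi: "\<And>x. x \<in> F \<Longrightarrow> norm x \<le> \<psi> \<bullet> x" using pointed_psi[OF F pt] by blast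
  define F1 where "F1 = F \<inter> {x. \<psi> \<bullet> x = 1}"
  have scl: "(1 / (\<psi> \<bullet> y)) *\<^sub>R y \<in> F1" if y: "y \<in> F" "y \<noteq> 0" for y
  proof -
    have pos: "\<psi> \<bullet> y > 0" using psi[OF y(1)] y(2) by (meson order_less_le_trans zero_less_norm_iff)
    have "(1 / (\<psi> \<bullet> y)) *\<^sub>R y \<in> F" using mem_cone[OF F(3) y(1)] pos by simp
    moreover have "\<psi> \<bullet> ((1 / (\<psi> \<bullet> y)) *\<^sub>R y) = 1" using pos by simp
    ultimately show ?thesis unfolding F1_def by simp
  qed
  have "\<not> F \<subseteq> {0}"
  proof
    assume "F \<subseteq> {0}"
    then have "dim F = 0" using dim_eq_0 by blast
    then show False using d by simp
  qed
  then obtain y0 where y0: "y0 \<in> F" "y0 \<noteq> 0" by blast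
  have F1ne: "F1 \<noteq> {}" using scl[OF y0] by blast
  have "bounded F1" unfolding bounded_iff F1_def using psi by (intro exI[of _ 1]) (metis IntD1 IntD2 mem_Collect_eq)
  moreover have "closed F1" unfolding F1_def using F(1) closed_hyperplane by (intro closed_Int) auto
  ultimately have cF1: "compact F1" by (simp add: compact_eq_bounded_closed)
  have cvF1: "convex F1" unfolding F1_def using F(2) convex_hyperplane by (intro convex_Int) auto
  have "affine hull F1 \<subseteq> {x. \<psi> \<bullet> x = 1}"
    by (rule hull_minimal) (auto simp: F1_def affine_hyperplane)
  then have "0 \<notin> affine hull F1" by auto
  then have ai: "aff_dim (insert 0 F1) = aff_dim F1 + 1" by (simp add: aff_dim_insert)
  have "insert 0 F1 \<subseteq> span F" unfolding F1_def using span_superset span_zero by blast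
  then have "aff_dim (insert 0 F1) \<le> aff_dim (span F)" by (rule aff_dim_subset)
  also have "\<dots> = 2" using aff_dim_subspace[OF subspace_span, of F] d by simp
  finally have "aff_dim F1 \<le> 1" using ai by simp
  then have "collinear F1" by (simp add: collinear_aff_dim)
  then obtain p q where pq: "F1 = closed_segment p q"
    using compact_convex_collinear_segment[OF F1ne cF1 cvF1] by blast
  have pF: "p \<in> F" and qF: "q \<in> F" using pq unfolding F1_def
    by (metis IntD1 ends_in_segment)+
  have gen: "\<exists>\<alpha> \<beta>. \<alpha> \<ge> 0 \<and> \<beta> \<ge> 0 \<and> y = \<alpha> *\<^sub>R p + \<beta> *\<^sub>R q" if y: "y \<in> F" for y
  proof (cases "y = 0")
    case True then show ?thesis by (intro exI[of _ 0]) simp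
  next
    case False
    have pos: "\<psi> \<bullet> y > 0" using psi[OF y] False by (meson order_less_le_trans zero_less_norm_iff)
    have "(1 / (\<psi> \<bullet> y)) *\<^sub>R y \<in> closed_segment p q" using scl[OF y False] pq by simp
    then obtain u where u: "0 \<le> u" "u \<le> 1" "(1 / (\<psi> \<bullet> y)) *\<^sub>R y = (1 - u) *\<^sub>R p + u *\<^sub>R q"
      by (auto simp: in_segment)
    have "y = (\<psi> \<bullet> y) *\<^sub>R ((1 / (\<psi> \<bullet> y)) *\<^sub>R y)" using pos by simp
    also have "\<dots> = ((\<psi> \<bullet> y) * (1 - u)) *\<^sub>R p + ((\<psi> \<bullet> y) * u) *\<^sub>R q"
      unfolding u(3) by (simp add: scaleR_add_right)
    finally show ?thesis using pos u(1,2) by (intro exI conjI) auto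
  qed
  have sym: "False" if qs: "q \<in> span {p}"
    and gen: "\<And>y. y \<in> F \<Longrightarrow> \<exists>\<alpha> \<beta>. \<alpha> \<ge> 0 \<and> \<beta> \<ge> 0 \<and> y = \<alpha> *\<^sub>R p + \<beta> *\<^sub>R q" for p q
  proof -
    have "F \<subseteq> span {p}"
    proof
      fix y assume "y \<in> F"
      then obtain \<alpha> \<beta> where "y = \<alpha> *\<^sub>R p + \<beta> *\<^sub>R q" using gen by blast
      moreover have "p \<in> span {p}" by (simp add: span_base)
      ultimately show "y \<in> span {p}" using qs by (simp add: span_add span_scale)
    qed
    then have "dim F \<le> dim (span {p})" by (rule dim_subset)
    also have "\<dots> \<le> 1" using dim_single_le by simp
    finally show False using d by simp
  qed
  have qp: "q \<notin> span {p}" using sym[of q p] gen by blast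
  have gen': "\<exists>\<alpha> \<beta>. \<alpha> \<ge> 0 \<and> \<beta> \<ge> 0 \<and> y = \<alpha> *\<^sub>R q + \<beta> *\<^sub>R p" if "y \<in> F" for y
    using gen[OF that] by (metis add.commute)
  have pq': "p \<notin> span {q}" using sym[of p q] gen' by blast
  show ?thesis using that pF qF gen qp pq' by blast
qed

lemma full_face_pe:
  fixes K :: "'a::euclidean_space set"
  assumes K: "closed K" "convex K" "cone K" "K \<noteq> {}"
    and F: "is_face F K" and d: "dim K \<le> dim F"
  shows "projectionally_exposed_face F K"
proof -
  have Ff: "F face_of K" and Fne: "F \<noteq> {}" using F unfolding is_face_def by auto
  have FK: "F \<subseteq> K" using Ff face_of_imp_subset by blast
  have "span F = span K" using dim_eq_span[OF FK d] .
  then have "K \<subseteq> span F" using span_superset by blast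
  then have "F = K" using face_eq_span[OF Ff K(2,3) Fne] FK by blast
  moreover have "linear (id :: 'a \<Rightarrow> 'a)" by (rule linear_id)
  ultimately show ?thesis unfolding projectionally_exposed_face_def
    by (intro exI[of _ id]) auto
qed

theorem corollary6p4:
  fixes K :: "'a::euclidean_space set"
  assumes "closed K" and "convex K" and "cone K" and "K \<noteq> {}"
    and "dim K \<le> 4"
  shows "amenable K \<longleftrightarrow> projectionally_exposed K"
proof
  assume am: "amenable K"
  show "projectionally_exposed K"
    unfolding projectionally_exposed_def
  proof (intro allI impI)
    fix F assume F: "is_face F K"
    then obtain \<kappa> where kp: "\<kappa> > 0" and amF: "\<forall>x\<in>span F. infdist x F \<le> \<kappa> * infdist x K"
      using am unfolding amenable_def by blast
    have Ff: "F face_of K" and Fne: "F \<noteq> {}" and Fc: "closed F" using F unfolding is_face_def by auto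
    have FK: "F \<subseteq> K" using Ff face_of_imp_subset by blast
    have LF: "linsp K \<subseteq> F" using linsp_sub_face[OF Ff assms(3) Fne] .
    have ld: "dim (linsp K) \<le> dim F" using dim_subset[OF LF] .
    have dn: "dim F \<le> dim K" using dim_subset[OF FK] .
    show "projectionally_exposed_face F K"
    proof (cases "dim K \<le> dim F")
      case True then show ?thesis using full_face_pe[OF assms(1-4) F] by blast
    next
      case c1: False
      show ?thesis
      proof (cases "dim F + 1 = dim K")
        case True then show ?thesis using facet_pe[OF assms(1-4) F True kp amF] by blast
      next
        case c2: False
        show ?thesis
        proof (cases "dim F \<le> dim (linsp K)")
          case True then show ?thesis using lin_face_pe[OF assms(1-4) F True] by blast
        next
          case c3: False
          show ?thesis
          proof (cases "dim F = dim (linsp K) + 1")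
            case True then show ?thesis using ray_face_pe[OF assms(1-4) F True] by blast
          next
            case c4: False
            have d2: "dim F = 2" using c1 c2 c3 c4 ld dn assms(5) by linarith
            have l0: "dim (linsp K) = 0" using c1 c2 c3 c4 ld dn assms(5) by linarith
            have "linsp K \<subseteq> {0}" using l0 dim_eq_0 by blast
            then have pt: "x = 0" if "x \<in> F" "- x \<in> F" for x
              using that FK unfolding linsp_def by blast
            have Fcv: "convex F" using Ff face_of_imp_convex by blast
            have Fcone: "cone F" using face_cone[OF Ff assms(3) Fne] .
            obtain p q where pq: "p \<in> F" "q \<in> F"
              "\<And>y. y \<in> F \<Longrightarrow> \<exists>\<alpha> \<beta>. \<alpha> \<ge> 0 \<and> \<beta> \<ge> 0 \<and> y = \<alpha> *\<^sub>R p + \<beta> *\<^sub>R q"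
              "q \<notin> span {p}" "p \<notin> span {q}"
              using two_gen[OF Fc Fcv Fcone Fne pt d2] by blast
            show ?thesis using two_pe[OF assms(1-4) Ff Fne pq kp amF] .
          qed
        qed
      qed
    qed
  qed
next
  assume pe: "projectionally_exposed K"
  show "amenable K"
    unfolding amenable_def
  proof (intro allI impI)
    fix F assume "is_face F K"
    then obtain P where "linear P" "P \<circ> P = P" "P ` K = F"
      using pe unfolding projectionally_exposed_def projectionally_exposed_face_def by blast
    then show "\<exists>\<kappa>>0. \<forall>x\<in>span F. infdist x F \<le> \<kappa> * infdist x K"
      using pe_imp_amen assms(4) by blast
  qed
qed

end
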